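(* If $\mathbf M\in\mathcal M_1$ and $\mathbf F(\mathbf s)\neq\mathbf M\mathbf s$, then $F_i(n;\mathbf s)\to1$ as $n\to\infty$, uniformly in $i\in\mathbb N$ and $\mathbf s\in(0,1]^{\mathbb N}$.
   Context: A GWBP/$\infty$ has types $\mathbb N=\{1,2,\dots\}$. Each particle lives one unit of time; a type-$i$ particle produces, independently of everything else, a random vector $\mathbf Z_i=(Z_{ij})_{j\in\mathbb N}$ of children, with $Z_i:=\sum_jZ_{ij}<\infty$ a.s. $\mathbf Z_i(n)=(Z_{ij}(n))_j$ is the generation-$n$ population from one type-$i$ particle. $F_i(n;\mathbf s)=\mathbb E\prod_js_j^{Z_{ij}(n)}$, $F_i(\mathbf s)=F_i(1;\mathbf s)$; "$\mathbf F(\mathbf s)\neq\mathbf M\mathbf s$" means it is not true that $F_i(\mathbf s)=\sum_jM_{ij}s_j$ for all $i,\mathbf s$. Mean matrix $\mathbf M=(M_{ij})$, $M_{ij}=\mathbb EZ_{ij}$, $M^{(n)}_{ij}=\mathbb EZ_{ij}(n)$, $M_i=\sum_jM_{ij}$. Irreducible: for all $i,j$ some $M^{(n)}_{ij}>0$; aperiodic: gcd of such $n$ is 1; then $\lim_n(M^{(n)}_{ij})^{1/n}=1/R$ for a common $R$. $\mathbf M\in\mathcal M_1$ means: (i) irreducible, aperiodic, $R=1$, 1-recurrent ($\sum_nM^{(n)}_{ij}=\infty$) and 1-positive ($\lim_nM^{(n)}_{ij}>0$ for all $i,j$); then there are positive eigenvectors $\mathbf v\mathbf M=\mathbf v$,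 $\mathbf M\mathbf u^T=\mathbf u^T$, unique up to positive multiples, normalized with $\sum_jv_ju_j=1$; (ii) $\sum_jv_j=1$ and $\sup_iu_i<\infty$; (iii) $\lim_{N\to\infty}\sup_iM_i^{-1}\sum_{j>N}M_{ij}=0$ and $\lim_{K\to\infty}\sup_iM_i^{-1}\mathbb E[Z_i;Z_i>K]=0$. *)

theory Defs
  imports "HOL-Probability.Probability"
begin

text \<open>Types are
indexed by nat (a relabelling of {1,2,...}). An offspring vector is a function
nat \<Rightarrow> nat (number of children of each type); the offspring law of a
type-i particle is the pmf P i.\<close>

definition supp :: "(nat \<Rightarrow> nat) \<Rightarrow> nat set" where
  "supp z = {j. z j \<noteq> 0}"

definition total :: "(nat \<Rightarrow> nat) \<Rightarrow> nat" where
  "total z = sum z (supp z)"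

definition children :: "(nat \<Rightarrow> nat) \<Rightarrow> nat list" where
  "children z = concat (map (\<lambda>j. replicate (z j) j) (sorted_list_of_set (supp z)))"

fun sum_indep :: "(nat \<Rightarrow> (nat \<Rightarrow> nat) pmf) \<Rightarrow> nat list \<Rightarrow> (nat \<Rightarrow> nat) pmf" where
  "sum_indep D [] = return_pmf (\<lambda>_. 0)"
| "sum_indep D (j # js) =
     map_pmf (\<lambda>(a, b). (\<lambda>k. a k + b k)) (pair_pmf (D j) (sum_indep D js))"

text \<open>Zdist P n i: law of the generation-n population vector Z_i(n) started
from one type-i particle.\<close>
fun Zdist :: "(nat \<Rightarrow> (nat \<Rightarrow> nat) pmf) \<Rightarrow> nat \<Rightarrow> nat \<Rightarrow> (nat \<Rightarrow> nat) pmf" where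
  "Zdist P 0 i = return_pmf (\<lambda>j. if j = i then 1 else 0)"
| "Zdist P (Suc n) i = bind_pmf (P i) (\<lambda>z. sum_indep (\<lambda>j. Zdist P n j) (children z))"

definition Fgen :: "(nat \<Rightarrow> (nat \<Rightarrow> nat) pmf) \<Rightarrow> nat \<Rightarrow> nat \<Rightarrow> (nat \<Rightarrow> real) \<Rightarrow> real" where
  "Fgen P n i s = measure_pmf.expectation (Zdist P n i) (\<lambda>z. \<Prod>j\<in>supp z. s j ^ z j)"

definition F1 :: "(nat \<Rightarrow> (nat \<Rightarrow> nat) pmf) \<Rightarrow> nat \<Rightarrow> (nat \<Rightarrow> real) \<Rightarrow> real" where
  "F1 P i s = Fgen P 1 i s"

definition Mmat :: "(nat \<Rightarrow> (nat \<Rightarrow> nat) pmf) \<Rightarrow> nat \<Rightarrow> nat \<Rightarrow> ennreal" where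
  "Mmat P i j = (\<integral>\<^sup>+ z. of_nat (z j) \<partial>measure_pmf (P i))"

fun Mpow :: "(nat \<Rightarrow> (nat \<Rightarrow> nat) pmf) \<Rightarrow> nat \<Rightarrow> nat \<Rightarrow> nat \<Rightarrow> ennreal" where
  "Mpow P 0 i j = (if i = j then 1 else 0)"
| "Mpow P (Suc n) i j = (\<Sum>k. Mpow P n i k * Mmat P k j)"

definition Mrow :: "(nat \<Rightarrow> (nat \<Rightarrow> nat) pmf) \<Rightarrow> nat \<Rightarrow> ennreal" where
  "Mrow P i = (\<Sum>j. Mmat P i j)"

definition in_M1 :: "(nat \<Rightarrow> (nat \<Rightarrow> nat) pmf) \<Rightarrow> bool" where
  "in_M1 P \<longleftrightarrow>
     \<comment> \<open>(i) irreducible\<close>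
     (\<forall>i j. \<exists>n. Mpow P n i j > 0) \<and>
     \<comment> \<open>aperiodic\<close>
     (\<forall>i j. Gcd {n. Mpow P n i j > 0} = 1) \<and>
     \<comment> \<open>R = 1: (M^(n)_ij)^(1/n) \<rightarrow> 1 (in particular eventually finite)\<close>
     (\<forall>i j. (\<forall>\<^sub>F n in sequentially. Mpow P n i j < \<top>) \<and>
            (\<lambda>n. root n (enn2real (Mpow P n i j))) \<longlonglongrightarrow> 1) \<and>
     \<comment> \<open>1-recurrent\<close>
     (\<forall>i j. (\<Sum>n. Mpow P n i j) = \<top>) \<and>
     \<comment> \<open>1-positive\<close>
     (\<forall>i j. \<exists>L::real. L > 0 \<and> (\<lambda>n. Mpow P n i j) \<longlonglongrightarrow> ennreal L) \<and>
     \<comment> \<open>(ii) positive left/right eigenvectors, normalised, sum v = 1, u bounded\<close>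
     (\<exists>v u :: nat \<Rightarrow> real.
        (\<forall>j. v j > 0) \<and> (\<forall>i. u i > 0) \<and>
        (\<forall>j. (\<Sum>i. ennreal (v i) * Mmat P i j) = ennreal (v j)) \<and>
        (\<forall>i. (\<Sum>j. Mmat P i j * ennreal (u j)) = ennreal (u i)) \<and>
        (\<Sum>j. ennreal (v j * u j)) = 1 \<and>
        (\<Sum>j. ennreal (v j)) = 1 \<and>
        bdd_above (range u)) \<and>
     \<comment> \<open>(iii) uniform tightness conditions; sup_i M_i^(-1) X_i \<rightarrow> 0 written as X_i \<le> eps M_i\<close>
     (\<forall>\<epsilon>::real. \<epsilon> > 0 \<longrightarrow> (\<exists>N0. \<forall>N\<ge>N0. \<forall>i.
         (\<Sum>j. if j > N then Mmat P i j else 0) \<le> ennreal \<epsilon> * Mrow P i)) \<and>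
     (\<forall>\<epsilon>::real. \<epsilon> > 0 \<longrightarrow> (\<exists>K0. \<forall>K\<ge>K0. \<forall>i.
         (\<integral>\<^sup>+ z. (if total z > K then of_nat (total z) else 0) \<partial>measure_pmf (P i))
           \<le> ennreal \<epsilon> * Mrow P i))"

end

theory Submission
  imports Defs
begin


definition H :: "(nat \<Rightarrow> real) \<Rightarrow> (nat \<Rightarrow> nat) \<Rightarrow> real" where
  "H s w = (\<Prod>j\<in>supp w. s j ^ w j)"

lemma H_superset: "finite U \<Longrightarrow> supp w \<subseteq> U \<Longrightarrow> H s w = (\<Prod>j\<in>U. s j ^ w j)"
  unfolding H_def by (rule prod.mono_neutral_left) (auto simp: supp_def)

lemma supp_add: "supp (\<lambda>k. a k + b k) = supp a \<union> supp b" by (auto simp: supp_def)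

lemma H_add: "finite (supp a) \<Longrightarrow> finite (supp b) \<Longrightarrow> H s (\<lambda>k. a k + b k) = H s a * H s b"
proof -
  assume fa: "finite (supp a)" and fb: "finite (supp b)"
  let ?U = "supp a \<union> supp b"
  have "H s (\<lambda>k. a k + b k) = (\<Prod>j\<in>?U. s j ^ (a j + b j))"
    using fa fb by (intro H_superset) (auto simp: supp_add)
  also have "\<dots> = (\<Prod>j\<in>?U. s j ^ a j) * (\<Prod>j\<in>?U. s j ^ b j)"
    by (simp add: power_add prod.distrib)
  also have "\<dots> = H s a * H s b"
    using fa fb by (simp add: H_superset[of ?U a s] H_superset[of ?U b s])
  finally show ?thesis .
qed

lemma H_nonneg: "(\<And>j. 0 \<le> s j) \<Longrightarrow> 0 \<le> H s w"
  unfolding H_def by (intro prod_nonneg) auto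

lemma H_le1: "(\<And>j. 0 \<le> s j \<and> s j \<le> 1) \<Longrightarrow> H s w \<le> 1"
  unfolding H_def by (intro prod_le_1) (auto intro: power_le_one)

definition fs :: "(nat \<Rightarrow> nat) pmf \<Rightarrow> bool" where "fs p \<longleftrightarrow> (\<forall>w\<in>set_pmf p. finite (supp w))"

lemma fs_sum_indep: "(\<And>k. k \<in> set js \<Longrightarrow> fs (D k)) \<Longrightarrow> fs (sum_indep D js)"
  by (induction js) (auto simp: fs_def supp_def supp_add[unfolded supp_def])

lemma nn_sum_indep:
  assumes s: "\<And>j. 0 \<le> s j" and D: "\<And>k. k \<in> set js \<Longrightarrow> fs (D k)"
  shows "(\<integral>\<^sup>+w. ennreal (H s w) \<partial>sum_indep D js) = prod_list (map (\<lambda>k. \<integral>\<^sup>+w. ennreal (H s w) \<partial>D k) js)"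
  using D
proof (induction js)
  case Nil
  then show ?case by (simp add: H_def supp_def)
next
  case (Cons j js)
  have fj: "fs (D j)" and fr: "fs (sum_indep D js)" using Cons.prems by (auto intro: fs_sum_indep)
  have "(\<integral>\<^sup>+w. ennreal (H s w) \<partial>sum_indep D (j # js))
      = (\<integral>\<^sup>+a. \<integral>\<^sup>+b. ennreal (H s (\<lambda>k. a k + b k)) \<partial>sum_indep D js \<partial>D j)"
    by (simp add: nn_integral_pair_pmf')
  also have "\<dots> = (\<integral>\<^sup>+a. \<integral>\<^sup>+b. ennreal (H s a) * ennreal (H s b) \<partial>sum_indep D js \<partial>D j)"
    apply (intro nn_integral_cong_AE)
    apply (unfold AE_measure_pmf_iff)
    apply clarify
    apply (intro nn_integral_cong_AE)
    apply (unfold AE_measure_pmf_iff)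
    using fj fr by (auto simp: fs_def H_add ennreal_mult H_nonneg s)
  also have "\<dots> = (\<integral>\<^sup>+a. ennreal (H s a) \<partial>D j) * (\<integral>\<^sup>+b. ennreal (H s b) \<partial>sum_indep D js)"
    by (simp add: nn_integral_cmult nn_integral_multc)
  finally show ?case using Cons by simp
qed

lemma prod_list_concat': "prod_list (concat xss) = prod_list (map prod_list (xss :: 'a::comm_monoid_mult list list))"
  by (induction xss) auto

lemma children_prod:
  fixes f :: "nat \<Rightarrow> 'a::comm_monoid_mult"
  assumes "finite (supp z)"
  shows "prod_list (map f (children z)) = (\<Prod>j\<in>supp z. f j ^ z j)"
  unfolding children_def using assms
  by (simp add: map_concat prod_list_concat' comp_def prod_list_replicate prod.distinct_set_conv_list[symmetric])

lemma fs_Zdist: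
  assumes fo: "\<And>i z. z \<in> set_pmf (P i) \<Longrightarrow> finite (supp z)"
  shows "fs (Zdist P n i)"
proof (induction n arbitrary: i)
  case 0
  then show ?case by (simp add: fs_def supp_def)
next
  case (Suc n)
  then show ?case using fs_sum_indep[of _ "\<lambda>j. Zdist P n j"] 
    by (auto simp: fs_def)
qed



lemma Fgen_H: "Fgen P n i s = measure_pmf.expectation (Zdist P n i) (H s)"
  unfolding Fgen_def H_def ..

lemma integrable_H: "(\<And>j. 0 \<le> s j \<and> s j \<le> 1) \<Longrightarrow> integrable (measure_pmf p) (H s)"
  by (intro measure_pmf.integrable_const_bound[where B=1]) (auto simp: H_le1 H_nonneg)

lemma nn_H: "(\<And>j. 0 \<le> s j \<and> s j \<le> 1) \<Longrightarrow> (p::(nat\<Rightarrow>nat) pmf) = p \<Longrightarrow>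
   (\<integral>\<^sup>+w. ennreal (H s w) \<partial>p) = ennreal (measure_pmf.expectation p (H s))"
  by (intro nn_integral_eq_integral integrable_H) (auto simp: H_nonneg)

lemma exp_H_nonneg: "(\<And>j. 0 \<le> s j \<and> s j \<le> 1) \<Longrightarrow> 0 \<le> measure_pmf.expectation p (H s)"
  by (intro integral_nonneg_AE) (auto simp: H_nonneg)

lemma exp_H_le1: "(\<And>j. 0 \<le> s j \<and> s j \<le> 1) \<Longrightarrow> measure_pmf.expectation p (H s) \<le> 1"
proof -
  assume s: "\<And>j. 0 \<le> s j \<and> s j \<le> 1"
  have "ennreal (measure_pmf.expectation p (H s)) = (\<integral>\<^sup>+w. ennreal (H s w) \<partial>p)"
    using nn_H[OF s refl] by simp
  also have "\<dots> \<le> (\<integral>\<^sup>+w. 1 \<partial>p)"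
    by (intro nn_integral_mono) (auto simp: H_le1 s)
  also have "\<dots> = 1" by simp
  finally show ?thesis by (simp add: ennreal_le_1)
qed

lemma Fgen_bounds: "(\<And>j. 0 \<le> s j \<and> s j \<le> 1) \<Longrightarrow> 0 \<le> Fgen P n i s \<and> Fgen P n i s \<le> 1"
  unfolding Fgen_H using exp_H_nonneg exp_H_le1 by blast

lemma Fgen_0: "Fgen P 0 i s = s i"
proof -
  have "supp (\<lambda>j. if j = i then 1 else 0 :: nat) = {i}" by (auto simp: supp_def)
  then show ?thesis by (simp add: Fgen_def)
qed

lemma Fgen_Suc:
  assumes fo: "\<And>i z. z \<in> set_pmf (P i) \<Longrightarrow> finite (supp z)"
    and s: "\<And>j. 0 \<le> s j \<and> s j \<le> 1"
  shows "Fgen P (Suc n) i s = measure_pmf.expectation (P i) (H (\<lambda>j. Fgen P n j s))"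
proof -
  have sb: "\<And>j. 0 \<le> Fgen P n j s \<and> Fgen P n j s \<le> 1" using Fgen_bounds s by blast
  have "ennreal (Fgen P (Suc n) i s) = (\<integral>\<^sup>+w. ennreal (H s w) \<partial>Zdist P (Suc n) i)"
    unfolding Fgen_H using nn_H[OF s refl] by simp
  also have "\<dots> = (\<integral>\<^sup>+z. \<integral>\<^sup>+w. ennreal (H s w) \<partial>sum_indep (\<lambda>j. Zdist P n j) (children z) \<partial>P i)"
    by simp
  also have "\<dots> = (\<integral>\<^sup>+z. prod_list (map (\<lambda>k. ennreal (Fgen P n k s)) (children z)) \<partial>P i)"
    apply (intro nn_integral_cong)
    apply (subst nn_sum_indep)
    using s fs_Zdist[OF fo] by (auto simp: Fgen_H nn_H[OF _ refl])
  also have "\<dots> = (\<integral>\<^sup>+z. ennreal (H (\<lambda>j. Fgen P n j s) z) \<partial>P i)"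
    apply (intro nn_integral_cong_AE)
    apply (unfold AE_measure_pmf_iff)
    using fo sb by (auto simp: children_prod H_def prod_ennreal ennreal_power prod_nonneg)
  also have "\<dots> = ennreal (measure_pmf.expectation (P i) (H (\<lambda>j. Fgen P n j s)))"
    using nn_H[OF sb refl] by simp
  finally show ?thesis
    using Fgen_bounds[OF s] exp_H_nonneg[OF sb] by (simp add: ennreal_inj)
qed



lemma one_minus_prod_le:
  fixes p :: "nat \<Rightarrow> real"
  assumes "finite S" "\<And>j. j \<in> S \<Longrightarrow> 0 \<le> p j \<and> p j \<le> 1"
  shows "1 - prod p S \<le> (\<Sum>j\<in>S. 1 - p j)"
  using assms
proof (induction S rule: finite_induct)
  case empty
  then show ?case by simp
next
  case (insert a S)
  have pa: "0 \<le> p a" "p a \<le> 1" using insert.prems by auto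
  have Q: "0 \<le> prod p S" "prod p S \<le> 1" using insert.prems
    by (auto intro!: prod_nonneg prod_le_1)
  have IH: "1 - prod p S \<le> (\<Sum>j\<in>S. 1 - p j)" using insert by auto
  have "1 - p a * prod p S \<le> (1 - p a) + (1 - prod p S)"
  proof -
    have "0 \<le> (1 - p a) * (1 - prod p S)" using pa Q by simp
    then show ?thesis by (simp add: algebra_simps)
  qed
  then show ?case using insert IH by simp
qed

lemma one_minus_prod_less:
  fixes p :: "nat \<Rightarrow> real"
  assumes S: "finite S" and p: "\<And>j. j \<in> S \<Longrightarrow> 0 \<le> p j \<and> p j \<le> 1"
    and ab: "a \<in> S" "b \<in> S" "a \<noteq> b" "p a < 1" "p b < 1"
  shows "1 - prod p S < (\<Sum>j\<in>S. 1 - p j)"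
proof -
  let ?Q = "prod p (S - {a})"
  have Q0: "0 \<le> ?Q" using p by (auto intro!: prod_nonneg)
  have "?Q = p b * prod p (S - {a} - {b})"
    using ab S by (subst prod.remove[of _ b]) auto
  also have "\<dots> \<le> p b"
  proof (rule mult_left_le)
    show "prod p (S - {a} - {b}) \<le> 1" using p by (intro prod_le_1) auto
    show "0 \<le> p b" using p ab by auto
  qed
  finally have Qb: "?Q < 1" using ab by simp
  have IH: "1 - ?Q \<le> (\<Sum>j\<in>S - {a}. 1 - p j)"
    using S p by (intro one_minus_prod_le) auto
  have pa: "0 \<le> p a" using p ab by auto
  have "prod p S = p a * ?Q" using S ab by (simp add: prod.remove)
  moreover have "1 - p a * ?Q < (1 - p a) + (1 - ?Q)"
  proof -
    have "0 < (1 - p a) * (1 - ?Q)" using ab Qb by simp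
    then show ?thesis by (simp add: algebra_simps)
  qed
  moreover have "(\<Sum>j\<in>S. 1 - p j) = (1 - p a) + (\<Sum>j\<in>S - {a}. 1 - p j)"
    using S ab by (simp add: sum.remove)
  ultimately show ?thesis using IH by linarith
qed

lemma bernoulli_le:
  fixes x :: real
  assumes "0 \<le> x" "x \<le> 1"
  shows "1 - (1 - x) ^ k \<le> real k * x"
proof -
  have "1 + real k * (- x) \<le> (1 + - x) ^ k"
    by (rule Bernoulli_inequality) (use assms in simp)
  then show ?thesis by simp
qed

lemma bernoulli_less:
  fixes x :: real
  assumes "0 < x" "x \<le> 1" "2 \<le> k"
  shows "1 - (1 - x) ^ k < real k * x"
  using assms(3)
proof (induction k rule: dec_induct)
  case base
  then show ?case using assms by (simp add: power2_eq_square algebra_simps)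
next
  case (step k)
  show ?case
  proof (cases "x = 1")
    case True
    then show ?thesis using step by simp
  next
    case False
    then have x1: "0 < 1 - x" using assms by simp
    have "(1 - x) * (1 - real k * x) < (1 - x) * (1 - x) ^ k"
      using step x1 by (intro mult_strict_left_mono) auto
    moreover have "1 - real (Suc k) * x \<le> (1 - x) * (1 - real k * x)"
    proof -
      have "0 \<le> real k * x * x" using assms by simp
      then show ?thesis by (simp add: algebra_simps)
    qed
    ultimately show ?thesis by simp
  qed
qed

definition total' :: "(nat \<Rightarrow> nat) \<Rightarrow> nat" where "total' z = total z"

lemma H_ineq:
  assumes fin: "finite (supp z)" and x: "\<And>j. 0 \<le> x j \<and> x j \<le> 1"
  shows "1 - H (\<lambda>j. 1 - x j) z \<le> (\<Sum>j\<in>supp z. real (z j) * x j)"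
proof -
  have "1 - H (\<lambda>j. 1 - x j) z \<le> (\<Sum>j\<in>supp z. 1 - (1 - x j) ^ z j)"
    unfolding H_def using fin x by (intro one_minus_prod_le) (auto intro: power_le_one)
  also have "\<dots> \<le> (\<Sum>j\<in>supp z. real (z j) * x j)"
    using x by (intro sum_mono bernoulli_le) auto
  finally show ?thesis .
qed

lemma H_strict:
  assumes fin: "finite (supp z)" and x: "\<And>j. 0 < x j \<and> x j \<le> 1" and t: "2 \<le> total z"
  shows "1 - H (\<lambda>j. 1 - x j) z < (\<Sum>j\<in>supp z. real (z j) * x j)"
proof (cases "\<exists>a\<in>supp z. \<exists>b\<in>supp z. a \<noteq> b")
  case True
  then obtain a b where ab: "a \<in> supp z" "b \<in> supp z" "a \<noteq> b" by blast
  have lt: "(1 - x j) ^ z j < 1" if "j \<in> supp z" for j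
    using that x[of j] by (subst power_less_one_iff) (auto simp: supp_def)
  have "1 - H (\<lambda>j. 1 - x j) z < (\<Sum>j\<in>supp z. 1 - (1 - x j) ^ z j)"
    unfolding H_def using fin x ab lt by (intro one_minus_prod_less[of _ _ a b]) (auto intro: power_le_one less_imp_le)
  also have "\<dots> \<le> (\<Sum>j\<in>supp z. real (z j) * x j)"
    using x by (intro sum_mono bernoulli_le) (auto intro: less_imp_le)
  finally show ?thesis .
next
  case False
  have "supp z \<noteq> {}" using t by (auto simp: total_def)
  then obtain a where a: "a \<in> supp z" by blast
  with False have S: "supp z = {a}" by blast
  then have za: "2 \<le> z a" using t by (simp add: total_def)
  show ?thesis unfolding H_def S using bernoulli_less[of "x a" "z a"] x[of a] za by simp
qed



lemma suminf_swap_ennreal: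
  fixes f :: "nat \<Rightarrow> nat \<Rightarrow> ennreal"
  shows "(\<Sum>i. \<Sum>j. f i j) = (\<Sum>j. \<Sum>i. f i j)"
proof -
  have "(\<Sum>i. \<Sum>j. f i j) = (\<Sum>i. \<integral>\<^sup>+j. f i j \<partial>count_space UNIV)"
    by (simp add: nn_integral_count_space_nat)
  also have "\<dots> = (\<integral>\<^sup>+j. (\<Sum>i. f i j) \<partial>count_space UNIV)"
    by (rule nn_integral_suminf[symmetric]) auto
  also have "\<dots> = (\<Sum>j. \<Sum>i. f i j)"
    by (simp add: nn_integral_count_space_nat)
  finally show ?thesis .
qed

lemma suminf_eq_termwise:
  fixes a b :: "nat \<Rightarrow> ennreal"
  assumes le: "\<And>i. a i \<le> b i" and eq: "(\<Sum>i. b i) = (\<Sum>i. a i)" and fin: "(\<Sum>i. a i) \<noteq> \<top>"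
  shows "a i = b i"
proof -
  have "(\<Sum>i. b i) = (\<Sum>i. a i + (b i - a i))"
    using le by (simp add: add_diff_inverse_ennreal)
  also have "\<dots> = (\<Sum>i. a i) + (\<Sum>i. b i - a i)"
    by (rule suminf_add[symmetric]) auto
  finally have "(\<Sum>i. a i) + (\<Sum>i. b i - a i) = (\<Sum>i. a i) + 0"
    using eq by simp
  then have "(\<Sum>i. b i - a i) = 0"
    using fin by (simp only: ennreal_add_left_cancel) (simp add: top_unique)
  then have "b i - a i = 0" by (simp add: suminf_eq_zero_iff)
  then show ?thesis using le[of i] by (simp add: antisym diff_eq_0_iff_ennreal)
qed

lemma nn_eq_on_pmf:
  fixes f g :: "'a \<Rightarrow> ennreal"
  assumes le: "\<And>z. z \<in> set_pmf p \<Longrightarrow> f z \<le> g z"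
    and eq: "(\<integral>\<^sup>+z. g z \<partial>p) = (\<integral>\<^sup>+z. f z \<partial>p)" and fin: "(\<integral>\<^sup>+z. f z \<partial>p) \<noteq> \<top>"
    and z: "z \<in> set_pmf p"
  shows "f z = g z"
proof -
  have "(\<integral>\<^sup>+z. g z \<partial>p) = (\<integral>\<^sup>+z. f z + (g z - f z) \<partial>p)"
    using le by (intro nn_integral_cong_AE) (auto simp: AE_measure_pmf_iff add_diff_inverse_ennreal)
  also have "\<dots> = (\<integral>\<^sup>+z. f z \<partial>p) + (\<integral>\<^sup>+z. g z - f z \<partial>p)"
    by (rule nn_integral_add) auto
  finally have "(\<integral>\<^sup>+z. f z \<partial>p) + (\<integral>\<^sup>+z. g z - f z \<partial>p) = (\<integral>\<^sup>+z. f z \<partial>p) + 0"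
    using eq by simp
  then have "(\<integral>\<^sup>+z. g z - f z \<partial>p) = 0"
    using fin by (simp only: ennreal_add_left_cancel) (simp add: top_unique)
  then have "AE z in p. g z - f z = 0" by (subst (asm) nn_integral_0_iff_AE) auto
  then have "g z - f z = 0" using z by (simp add: AE_measure_pmf_iff)
  then show ?thesis using le[OF z] by (simp add: antisym diff_eq_0_iff_ennreal)
qed

definition MX :: "(nat \<Rightarrow> (nat \<Rightarrow> nat) pmf) \<Rightarrow> nat \<Rightarrow> (nat \<Rightarrow> real) \<Rightarrow> ennreal" where
  "MX P i x = (\<Sum>j. Mmat P i j * ennreal (x j))"

lemma MX_repr:
  assumes fo: "\<And>z. z \<in> set_pmf p \<Longrightarrow> finite (supp z)" and x: "\<And>j. 0 \<le> x j"
  shows "(\<Sum>j. (\<integral>\<^sup>+ z. of_nat (z j) \<partial>measure_pmf p) * ennreal (x j))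
       = (\<integral>\<^sup>+z. ennreal (\<Sum>j\<in>supp z. real (z j) * x j) \<partial>p)"
proof -
  have "(\<Sum>j. (\<integral>\<^sup>+ z. of_nat (z j) \<partial>measure_pmf p) * ennreal (x j))
      = (\<Sum>j. \<integral>\<^sup>+ z. ennreal (real (z j) * x j) \<partial>p)"
    by (simp add: nn_integral_multc[symmetric] ennreal_mult x ennreal_of_nat_eq_real_of_nat)
  also have "\<dots> = (\<integral>\<^sup>+z. (\<Sum>j. ennreal (real (z j) * x j)) \<partial>p)"
    by (rule nn_integral_suminf[symmetric]) auto
  also have "\<dots> = (\<integral>\<^sup>+z. ennreal (\<Sum>j\<in>supp z. real (z j) * x j) \<partial>p)"
  proof (intro nn_integral_cong_AE, unfold AE_measure_pmf_iff, intro ballI)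
    fix z assume "z \<in> set_pmf p"
    then have f: "finite (supp z)" by (rule fo)
    have "(\<Sum>j. ennreal (real (z j) * x j)) = (\<Sum>j\<in>supp z. ennreal (real (z j) * x j))"
      using f by (intro suminf_finite) (auto simp: supp_def)
    also have "\<dots> = ennreal (\<Sum>j\<in>supp z. real (z j) * x j)"
      using x by (intro sum_ennreal) auto
    finally show "(\<Sum>j. ennreal (real (z j) * x j)) = ennreal (\<Sum>j\<in>supp z. real (z j) * x j)" .
  qed
  finally show ?thesis .
qed

lemma one_minus_exp:
  assumes x: "\<And>j. 0 \<le> x j \<and> x j \<le> 1"
  shows "ennreal (1 - measure_pmf.expectation p (H (\<lambda>j. 1 - x j)))
       = (\<integral>\<^sup>+z. ennreal (1 - H (\<lambda>j. 1 - x j) z) \<partial>p)"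
proof -
  have s: "\<And>j. 0 \<le> 1 - x j \<and> 1 - x j \<le> 1" using x by auto
  have "1 - measure_pmf.expectation p (H (\<lambda>j. 1 - x j)) = measure_pmf.expectation p (\<lambda>z. 1 - H (\<lambda>j. 1 - x j) z)"
    using integrable_H[OF s] by (simp add: Bochner_Integration.integral_diff measure_pmf.prob_space)
  also have "ennreal \<dots> = (\<integral>\<^sup>+z. ennreal (1 - H (\<lambda>j. 1 - x j) z) \<partial>p)"
    using H_le1[OF s] by (intro nn_integral_eq_integral[symmetric]) (auto intro!: Bochner_Integration.integrable_diff integrable_H s)
  finally show ?thesis by simp
qed

lemma G_le_MX:
  assumes fo: "\<And>i z. z \<in> set_pmf (P i) \<Longrightarrow> finite (supp z)" and x: "\<And>j. 0 \<le> x j \<and> x j \<le> 1"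
  shows "ennreal (1 - measure_pmf.expectation (P i) (H (\<lambda>j. 1 - x j))) \<le> MX P i x"
proof -
  have MXe: "MX P i x = (\<integral>\<^sup>+z. ennreal (\<Sum>j\<in>supp z. real (z j) * x j) \<partial>P i)"
    unfolding MX_def Mmat_def using fo x by (intro MX_repr) auto
  show ?thesis
    unfolding one_minus_exp[OF x] MXe
  proof (intro nn_integral_mono_AE, unfold AE_measure_pmf_iff, intro ballI)
    fix z assume "z \<in> set_pmf (P i)"
    then have "finite (supp z)" by (rule fo)
    then show "ennreal (1 - H (\<lambda>j. 1 - x j) z) \<le> ennreal (\<Sum>j\<in>supp z. real (z j) * x j)"
      using x by (intro ennreal_leI H_ineq)
  qed
qed



definition q :: "(nat \<Rightarrow> (nat \<Rightarrow> nat) pmf) \<Rightarrow> nat \<Rightarrow> nat \<Rightarrow> real" where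
  "q P n i = Fgen P n i (\<lambda>_. 0)"

lemma q_bounds: "0 \<le> q P n i \<and> q P n i \<le> 1"
  unfolding q_def by (rule Fgen_bounds) auto

lemma q_0: "q P 0 i = 0"
  unfolding q_def by (simp add: Fgen_0)

lemma q_Suc:
  assumes fo: "\<And>i z. z \<in> set_pmf (P i) \<Longrightarrow> finite (supp z)"
  shows "q P (Suc n) i = measure_pmf.expectation (P i) (H (q P n))"
  unfolding q_def using Fgen_Suc[OF fo, where s="\<lambda>_. 0"] by (simp add: q_def[abs_def])

lemma H_mono: "(\<And>j. 0 \<le> a j \<and> a j \<le> b j) \<Longrightarrow> H a z \<le> H b z"
  unfolding H_def by (intro prod_mono power_mono conjI zero_le_power) auto

lemma exp_H_mono:
  assumes "\<And>j. 0 \<le> a j \<and> a j \<le> b j" "\<And>j. b j \<le> 1"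
  shows "measure_pmf.expectation p (H a) \<le> measure_pmf.expectation p (H b)"
proof (rule integral_mono)
  show "integrable (measure_pmf p) (H a)" using assms by (intro integrable_H) (smt (verit))
  show "integrable (measure_pmf p) (H b)" using assms by (intro integrable_H) (smt (verit))
  show "\<And>z. z \<in> space (measure_pmf p) \<Longrightarrow> H a z \<le> H b z" using assms by (intro H_mono) auto
qed

lemma q_mono:
  assumes fo: "\<And>i z. z \<in> set_pmf (P i) \<Longrightarrow> finite (supp z)"
  shows "q P n i \<le> q P (Suc n) i"
proof (induction n arbitrary: i)
  case 0
  then show ?case using q_bounds by (simp add: q_0)
next
  case (Suc n)
  have a: "q P (Suc (Suc n)) i = measure_pmf.expectation (P i) (H (q P (Suc n)))"
    by (rule q_Suc[OF fo])
  have b: "q P (Suc n) i = measure_pmf.expectation (P i) (H (q P n))"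
    by (rule q_Suc[OF fo])
  show ?case unfolding a b
    using q_bounds Suc by (intro exp_H_mono) auto
qed

lemma q_incseq:
  assumes fo: "\<And>i z. z \<in> set_pmf (P i) \<Longrightarrow> finite (supp z)"
  shows "incseq (\<lambda>n. q P n i)"
  using q_mono[OF fo] by (intro incseq_SucI) auto

lemma Fgen_ge_q:
  assumes s: "\<And>j. 0 < s j \<and> s j \<le> 1"
  shows "q P n i \<le> Fgen P n i s"
  unfolding q_def Fgen_H using s by (intro exp_H_mono) (auto intro: less_imp_le)

definition qs :: "(nat \<Rightarrow> (nat \<Rightarrow> nat) pmf) \<Rightarrow> nat \<Rightarrow> real" where
  "qs P i = (SUP n. q P n i)"

lemma q_lim:
  assumes fo: "\<And>i z. z \<in> set_pmf (P i) \<Longrightarrow> finite (supp z)"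
  shows "(\<lambda>n. q P n i) \<longlonglongrightarrow> qs P i"
  unfolding qs_def
  by (rule LIMSEQ_incseq_SUP) (use q_bounds q_incseq[OF fo] in \<open>auto simp: bdd_above_def\<close>)

lemma qs_bounds:
  assumes fo: "\<And>i z. z \<in> set_pmf (P i) \<Longrightarrow> finite (supp z)"
  shows "0 \<le> qs P i \<and> qs P i \<le> 1"
proof
  have l: "(\<lambda>n. q P n i) \<longlonglongrightarrow> qs P i" by (rule q_lim[OF fo])
  show "0 \<le> qs P i"
    using q_bounds by (intro LIMSEQ_le_const[OF l]) auto
  show "qs P i \<le> 1"
    using q_bounds by (intro LIMSEQ_le_const2[OF l]) auto
qed

lemma qs_fixed:
  assumes fo: "\<And>i z. z \<in> set_pmf (P i) \<Longrightarrow> finite (supp z)"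
  shows "qs P i = measure_pmf.expectation (P i) (H (qs P))"
proof -
  have "(\<lambda>n. measure_pmf.expectation (P i) (H (q P n))) \<longlonglongrightarrow> measure_pmf.expectation (P i) (H (qs P))"
  proof (rule integral_dominated_convergence[where w = "\<lambda>_. 1"])
    show "AE z in measure_pmf (P i). (\<lambda>n. H (q P n) z) \<longlonglongrightarrow> H (qs P) z"
      unfolding H_def by (auto intro!: tendsto_prod tendsto_power q_lim[OF fo])
    show "\<And>n. AE z in measure_pmf (P i). norm (H (q P n) z) \<le> 1"
      using q_bounds H_le1[of "q P _"] H_nonneg[of "q P _"] by (auto)
  qed auto
  then have "(\<lambda>n. q P (Suc n) i) \<longlonglongrightarrow> measure_pmf.expectation (P i) (H (qs P))"
    by (simp add: q_Suc[OF fo])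
  moreover have "(\<lambda>n. q P (Suc n) i) \<longlonglongrightarrow> qs P i"
    using q_lim[OF fo] by (rule LIMSEQ_Suc)
  ultimately show ?thesis using LIMSEQ_unique by blast
qed



lemma ennreal_le_suminf_term: "(f :: nat \<Rightarrow> ennreal) i \<le> (\<Sum>j. f j)"
  using sum_le_suminf[of f "{i}"] by auto

lemma vMrow:
  assumes veig: "\<And>j. (\<Sum>i. ennreal (v i) * Mmat P i j) = ennreal (v j)"
    and vsum: "(\<Sum>j. ennreal (v j)) = 1"
  shows "(\<Sum>i. ennreal (v i) * Mrow P i) = 1"
proof -
  have "(\<Sum>i. ennreal (v i) * Mrow P i) = (\<Sum>i. \<Sum>j. ennreal (v i) * Mmat P i j)"
    unfolding Mrow_def by simp
  also have "\<dots> = (\<Sum>j. \<Sum>i. ennreal (v i) * Mmat P i j)"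
    by (rule suminf_swap_ennreal)
  also have "\<dots> = 1" using veig vsum by simp
  finally show ?thesis .
qed

lemma Mrow_fin:
  assumes vpos: "\<And>j. v j > 0"
    and veig: "\<And>j. (\<Sum>i. ennreal (v i) * Mmat P i j) = ennreal (v j)"
    and vsum: "(\<Sum>j. ennreal (v j)) = 1"
  shows "Mrow P i \<noteq> \<top>"
proof
  assume t: "Mrow P i = \<top>"
  have "ennreal (v i) * Mrow P i \<le> 1"
    using ennreal_le_suminf_term[of "\<lambda>i. ennreal (v i) * Mrow P i" i] vMrow[OF veig vsum] by simp
  then show False using t vpos[of i] by (simp add: ennreal_mult_top top_unique)
qed

lemma vMX:
  assumes veig: "\<And>j. (\<Sum>i. ennreal (v i) * Mmat P i j) = ennreal (v j)"
  shows "(\<Sum>i. ennreal (v i) * MX P i x) = (\<Sum>j. ennreal (v j) * ennreal (x j))"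
proof -
  have "(\<Sum>i. ennreal (v i) * MX P i x) = (\<Sum>i. \<Sum>j. ennreal (v i) * Mmat P i j * ennreal (x j))"
    unfolding MX_def by (simp add: mult.assoc)
  also have "\<dots> = (\<Sum>j. \<Sum>i. ennreal (v i) * Mmat P i j * ennreal (x j))"
    by (rule suminf_swap_ennreal)
  also have "\<dots> = (\<Sum>j. (\<Sum>i. ennreal (v i) * Mmat P i j) * ennreal (x j))"
    by (simp add: ennreal_suminf_multc)
  also have "\<dots> = (\<Sum>j. ennreal (v j) * ennreal (x j))" using veig by simp
  finally show ?thesis .
qed

lemma propagate:
  assumes fx: "\<And>k. ennreal (x k) = MX P k x" and x0: "\<And>k. 0 \<le> x k"
  shows "Mpow P n i j > 0 \<Longrightarrow> x j > 0 \<Longrightarrow> x i > 0"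
proof (induction n arbitrary: j)
  case 0
  then show ?case by (simp split: if_splits)
next
  case (Suc n)
  have pos: "0 < (\<Sum>k. Mpow P n i k * Mmat P k j)" using Suc.prems(1) by simp
  have "\<exists>k. 0 < Mpow P n i k * Mmat P k j"
  proof (rule ccontr)
    assume "\<not> (\<exists>k. 0 < Mpow P n i k * Mmat P k j)"
    then have "\<And>k. Mpow P n i k * Mmat P k j = 0" by (simp add: not_less del: mult_eq_0_iff)
    then have "(\<lambda>k. Mpow P n i k * Mmat P k j) = (\<lambda>_. 0)" by (rule ext)
    then show False using pos by (simp del: mult_eq_0_iff)
  qed
  then obtain k where k: "0 < Mpow P n i k * Mmat P k j" by blast
  then have k1: "0 < Mpow P n i k" and k2: "0 < Mmat P k j" by (auto simp: zero_less_iff_neq_zero)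
  have "Mmat P k j * ennreal (x j) \<le> MX P k x"
    unfolding MX_def by (rule ennreal_le_suminf_term)
  moreover have "0 < Mmat P k j * ennreal (x j)" using k2 Suc.prems(2) by (auto simp: zero_less_iff_neq_zero)
  ultimately have "0 < ennreal (x k)" using fx[of k] by simp
  then have "0 < x k" by (simp add: ennreal_less_zero_iff)
  then show ?case using Suc.IH k1 by blast
qed

lemma total_supp: "finite (supp z) \<Longrightarrow> total z = (\<Sum>j\<in>supp z. z j)"
  by (simp add: total_def)

lemma total_le1_cases:
  assumes f: "finite (supp z)" and t: "total z \<le> 1"
  shows "supp z = {} \<or> (\<exists>a. supp z = {a} \<and> z a = 1)"
proof (cases "supp z = {}")
  case False
  then obtain a where a: "a \<in> supp z" by blast
  have S: "supp z = {a}"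
  proof (rule ccontr)
    assume "supp z \<noteq> {a}"
    then obtain b where b: "b \<in> supp z" "b \<noteq> a" using a by blast
    have "z a + z b = (\<Sum>j\<in>{a,b}. z j)" using b by simp
    also have "\<dots> \<le> (\<Sum>j\<in>supp z. z j)" using a b f by (intro sum_mono2) auto
    finally have "z a + z b \<le> total z" by (simp add: total_def)
    moreover have "z a \<ge> 1" "z b \<ge> 1" using a b by (auto simp: supp_def)
    ultimately show False using t by simp
  qed
  have "z a \<le> 1" using t S by (simp add: total_def)
  moreover have "z a \<noteq> 0" using a by (simp add: supp_def)
  ultimately have "z a = 1" by linarith
  then show ?thesis using S by blast
qed simp

lemma H_affine:
  assumes f: "finite (supp z)" and t: "total z \<le> 1"
  shows "H s z = (1 - real (total z)) + (\<Sum>j\<in>supp z. real (z j) * s j)"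
  using total_le1_cases[OF f t]
proof
  assume "supp z = {}" then show ?thesis by (simp add: H_def total_def)
next
  assume "\<exists>a. supp z = {a} \<and> z a = 1"
  then obtain a where "supp z = {a}" "z a = 1" by blast
  then show ?thesis by (simp add: H_def total_def)
qed



lemma Mrow_repr:
  assumes fo: "\<And>i z. z \<in> set_pmf (P i) \<Longrightarrow> finite (supp z)"
  shows "Mrow P k = (\<integral>\<^sup>+z. ennreal (real (total z)) \<partial>P k)"
proof -
  have "Mrow P k = (\<Sum>j. (\<integral>\<^sup>+ z. of_nat (z j) \<partial>measure_pmf (P k)) * ennreal ((\<lambda>_. 1::real) j))"
    unfolding Mrow_def Mmat_def by simp
  also have "\<dots> = (\<integral>\<^sup>+z. ennreal (\<Sum>j\<in>supp z. real (z j) * (\<lambda>_. 1::real) j) \<partial>P k)"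
    using fo by (intro MX_repr) auto
  also have "\<dots> = (\<integral>\<^sup>+z. ennreal (real (total z)) \<partial>P k)"
    using fo by (intro nn_integral_cong_AE) (auto simp: AE_measure_pmf_iff total_supp)
  finally show ?thesis .
qed

lemma extinction:
  assumes fo: "\<And>i z. z \<in> set_pmf (P i) \<Longrightarrow> finite (supp z)"
    and irr: "\<And>i j. \<exists>n. Mpow P n i j > 0"
    and vpos: "\<And>j. v j > 0"
    and veig: "\<And>j. (\<Sum>i. ennreal (v i) * Mmat P i j) = ennreal (v j)"
    and vsum: "(\<Sum>j. ennreal (v j)) = 1"
    and nonlinear: "\<not> (\<forall>i s. (\<forall>j. 0 \<le> s j \<and> s j \<le> 1) \<longrightarrow>
                         ennreal (F1 P i s) = (\<Sum>j. Mmat P i j * ennreal (s j)))"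
  shows "qs P i = 1"
proof -
  have Mr: "Mrow P k = (\<integral>\<^sup>+z. ennreal (real (total z)) \<partial>P k)" for k
    by (rule Mrow_repr) (rule fo)
  define x where "x j = 1 - qs P j" for j
  have x01: "\<And>j. 0 \<le> x j \<and> x j \<le> 1" using qs_bounds[OF fo] by (auto simp: x_def)
  have Hq: "H (\<lambda>j. 1 - x j) = H (qs P)" by (simp add: x_def)
  have xe: "ennreal (x k) = ennreal (1 - measure_pmf.expectation (P k) (H (\<lambda>j. 1 - x j)))" for k
    unfolding Hq using qs_fixed[OF fo, where i=k] by (simp add: x_def)
  have le: "ennreal (x k) \<le> MX P k x" for k
    unfolding xe by (rule G_le_MX[OF fo x01])
  have sums: "(\<Sum>k. ennreal (v k) * MX P k x) = (\<Sum>k. ennreal (v k) * ennreal (x k))"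
    by (rule vMX[OF veig])
  have fin: "(\<Sum>k. ennreal (v k) * ennreal (x k)) \<noteq> \<top>"
  proof -
    have "(\<Sum>k. ennreal (v k) * ennreal (x k)) \<le> (\<Sum>k. ennreal (v k))"
    proof (intro suminf_le)
      fix k
      have "v k * x k \<le> v k" using x01[of k] vpos[of k] by (intro mult_left_le) auto
      then show "ennreal (v k) * ennreal (x k) \<le> ennreal (v k)"
        using x01[of k] vpos[of k] by (simp add: ennreal_mult[symmetric] ennreal_leI)
    qed auto
    then show ?thesis using vsum by (auto simp: top_unique)
  qed
  have eqk: "ennreal (x k) = MX P k x" for k
  proof -
    have "ennreal (v k) * ennreal (x k) = ennreal (v k) * MX P k x"
      by (rule suminf_eq_termwise[where a = "\<lambda>k. ennreal (v k) * ennreal (x k)" and b = "\<lambda>k. ennreal (v k) * MX P k x"])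
         (use le sums fin in \<open>auto intro: mult_left_mono\<close>)
    then show ?thesis using vpos[of k] by (simp add: ennreal_mult_cancel_left)
  qed
  show ?thesis
  proof (rule ccontr)
    assume "qs P i \<noteq> 1"
    then have xi: "x i > 0" using x01[of i] by (auto simp: x_def)
    have allpos: "x k > 0" for k
    proof -
      obtain n where "Mpow P n k i > 0" using irr by blast
      then show ?thesis using propagate[OF eqk, of n k i] x01 xi by auto
    qed
    have tot: "total z \<le> 1" if z: "z \<in> set_pmf (P k)" for k z
    proof (rule ccontr)
      assume "\<not> total z \<le> 1"
      then have t2: "2 \<le> total z" by simp
      have fz: "finite (supp z)" using fo z by blast
      have strict: "1 - H (\<lambda>j. 1 - x j) z < (\<Sum>j\<in>supp z. real (z j) * x j)"
        using allpos x01 by (intro H_strict[OF fz _ t2]) auto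
      have MXe: "MX P k x = (\<integral>\<^sup>+z. ennreal (\<Sum>j\<in>supp z. real (z j) * x j) \<partial>P k)"
        unfolding MX_def Mmat_def using fo x01 by (intro MX_repr) auto
      have f1: "(\<integral>\<^sup>+z. ennreal (1 - H (\<lambda>j. 1 - x j) z) \<partial>P k) = ennreal (x k)"
        using one_minus_exp[OF x01, of "P k"] xe[of k] by simp
      have "ennreal (1 - H (\<lambda>j. 1 - x j) z) = ennreal (\<Sum>j\<in>supp z. real (z j) * x j)"
      proof (rule nn_eq_on_pmf[OF _ _ _ z])
        show "\<And>z. z \<in> set_pmf (P k) \<Longrightarrow> ennreal (1 - H (\<lambda>j. 1 - x j) z) \<le> ennreal (\<Sum>j\<in>supp z. real (z j) * x j)"
          using fo x01 by (intro ennreal_leI H_ineq) auto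
        show "(\<integral>\<^sup>+z. ennreal (\<Sum>j\<in>supp z. real (z j) * x j) \<partial>P k) = (\<integral>\<^sup>+z. ennreal (1 - H (\<lambda>j. 1 - x j) z) \<partial>P k)"
          unfolding f1 MXe[symmetric] eqk[symmetric] ..
        show "(\<integral>\<^sup>+z. ennreal (1 - H (\<lambda>j. 1 - x j) z) \<partial>P k) \<noteq> \<top>"
          unfolding f1 by simp
      qed
      moreover have "0 \<le> 1 - H (\<lambda>j. 1 - x j) z" using H_le1[of "\<lambda>j. 1 - x j"] x01 by auto
      moreover have "0 \<le> (\<Sum>j\<in>supp z. real (z j) * x j)" using x01 by (intro sum_nonneg) auto
      ultimately have "1 - H (\<lambda>j. 1 - x j) z = (\<Sum>j\<in>supp z. real (z j) * x j)"
        by (simp add: ennreal_inj)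
      then show False using strict by simp
    qed
    have Mle: "Mrow P k \<le> 1" for k
    proof -
      have "Mrow P k \<le> (\<integral>\<^sup>+z. 1 \<partial>P k)"
        unfolding Mr using tot
        by (intro nn_integral_mono_AE) (auto simp: AE_measure_pmf_iff)
      then show ?thesis by simp
    qed
    have M1: "Mrow P k = 1" for k
    proof -
      have "ennreal (v k) * Mrow P k = ennreal (v k)"
      proof (rule suminf_eq_termwise[where a = "\<lambda>k. ennreal (v k) * Mrow P k" and b = "\<lambda>k. ennreal (v k)"])
        show "ennreal (v i) * Mrow P i \<le> ennreal (v i)" for i
        proof -
          have "ennreal (v i) * Mrow P i \<le> ennreal (v i) * 1"
            by (rule mult_left_mono[OF Mle]) simp
          then show ?thesis by simp
        qed
        show "(\<Sum>i. ennreal (v i)) = (\<Sum>i. ennreal (v i) * Mrow P i)"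
          using vMrow[OF veig vsum] vsum by simp
        show "(\<Sum>i. ennreal (v i) * Mrow P i) \<noteq> \<top>"
          using vMrow[OF veig vsum] by simp
      qed
      then show ?thesis using vpos[of k] by (simp add: ennreal_mult_cancel_left[of _ _ 1, simplified])
    qed
    have lin: "ennreal (F1 P k s) = (\<Sum>j. Mmat P k j * ennreal (s j))"
      if s: "\<forall>j. 0 \<le> s j \<and> s j \<le> 1" for k s
    proof -
      have s': "\<And>j. 0 \<le> s j \<and> s j \<le> 1" using s by blast
      have F: "F1 P k s = measure_pmf.expectation (P k) (H s)"
        unfolding F1_def using Fgen_Suc[OF fo s', where n=0 and i=k] by (simp add: Fgen_0)
      have "ennreal (F1 P k s) = (\<integral>\<^sup>+z. ennreal (H s z) \<partial>P k)"
        unfolding F using nn_H[OF s' refl] by simp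
      also have "\<dots> = (\<integral>\<^sup>+z. ennreal (1 - real (total z)) + ennreal (\<Sum>j\<in>supp z. real (z j) * s j) \<partial>P k)"
      proof (intro nn_integral_cong_AE, unfold AE_measure_pmf_iff, intro ballI)
        fix z assume z: "z \<in> set_pmf (P k)"
        have t: "total z \<le> 1" using tot[OF z] .
        have "H s z = (1 - real (total z)) + (\<Sum>j\<in>supp z. real (z j) * s j)"
          using H_affine[OF fo[OF z] t] .
        moreover have "0 \<le> 1 - real (total z)" using t by simp
        moreover have "0 \<le> (\<Sum>j\<in>supp z. real (z j) * s j)" using s' by (intro sum_nonneg) auto
        ultimately show "ennreal (H s z) = ennreal (1 - real (total z)) + ennreal (\<Sum>j\<in>supp z. real (z j) * s j)"
          by simp
      qed
      also have "\<dots> = (\<integral>\<^sup>+z. ennreal (1 - real (total z)) \<partial>P k) + (\<integral>\<^sup>+z. ennreal (\<Sum>j\<in>supp z. real (z j) * s j) \<partial>P k)"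
        by (rule nn_integral_add) auto
      also have "(\<integral>\<^sup>+z. ennreal (1 - real (total z)) \<partial>P k) = 0"
      proof -
        have "(\<integral>\<^sup>+z. ennreal (1 - real (total z)) \<partial>P k) + (\<integral>\<^sup>+z. ennreal (real (total z)) \<partial>P k)
            = (\<integral>\<^sup>+z. ennreal (1 - real (total z)) + ennreal (real (total z)) \<partial>P k)"
          by (rule nn_integral_add[symmetric]) auto
        also have "\<dots> = (\<integral>\<^sup>+z. 1 \<partial>P k)"
        proof (intro nn_integral_cong_AE, unfold AE_measure_pmf_iff, intro ballI)
          fix z assume z: "z \<in> set_pmf (P k)"
          have t: "real (total z) \<le> 1" using tot[OF z] by simp
          have "ennreal (1 - real (total z)) + ennreal (real (total z)) = ennreal (1 - real (total z) + real (total z))"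
            using t by (intro ennreal_plus[symmetric]) auto
          then show "ennreal (1 - real (total z)) + ennreal (real (total z)) = 1" by simp
        qed
        also have "\<dots> = 1" by simp
        finally have "(\<integral>\<^sup>+z. ennreal (1 - real (total z)) \<partial>P k) + 1 = 0 + 1"
          using M1[of k] unfolding Mr by simp
        then show ?thesis using ennreal_add_left_cancel[of 1] by (simp add: add.commute)
      qed
      also have "(\<integral>\<^sup>+z. ennreal (\<Sum>j\<in>supp z. real (z j) * s j) \<partial>P k) = (\<Sum>j. Mmat P k j * ennreal (s j))"
        unfolding Mmat_def using fo s' by (intro MX_repr[symmetric]) auto
      finally show ?thesis by simp
    qed
    then show False using nonlinear by blast
  qed
qed



lemma Mrow_bound:
  assumes upos: "\<And>i. u i > 0" and ueig: "\<And>i. (\<Sum>j. Mmat P i j * ennreal (u j)) = ennreal (u i)"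
    and ubdd: "bdd_above (range u)"
    and tail: "\<forall>\<epsilon>::real. \<epsilon> > 0 \<longrightarrow> (\<exists>N0. \<forall>N\<ge>N0. \<forall>i.
         (\<Sum>j. if j > N then Mmat P i j else 0) \<le> ennreal \<epsilon> * Mrow P i)"
    and fin: "\<And>i. Mrow P i \<noteq> \<top>"
  shows "\<exists>B>0. \<forall>i. Mrow P i \<le> ennreal B"
proof -
  obtain N where N: "\<And>i. (\<Sum>j. if j > N then Mmat P i j else 0) \<le> ennreal (1/2) * Mrow P i"
    using tail[rule_format, of "1/2"] by auto
  obtain U where U: "\<And>i. u i \<le> U" using ubdd by (auto simp: bdd_above_def)
  define d where "d = Min (u ` {..N})"
  have dpos: "d > 0" unfolding d_def using upos by (subst Min_gr_iff) auto
  have dle: "\<And>j. j \<le> N \<Longrightarrow> d \<le> u j" unfolding d_def by (intro Min_le) auto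
  have U0: "U > 0" using U[of 0] upos[of 0] by simp
  show ?thesis
  proof (intro exI[of _ "2 * U / d"] conjI allI)
    show "2 * U / d > 0" using U0 dpos by simp
    fix i
    define A where "A = (\<Sum>j. if j \<le> N then Mmat P i j else 0)"
    define T where "T = (\<Sum>j. if j > N then Mmat P i j else 0)"
    have "A + T = (\<Sum>j. (if j \<le> N then Mmat P i j else 0) + (if j > N then Mmat P i j else 0))"
      unfolding A_def T_def by (rule suminf_add) auto
    also have "\<dots> = Mrow P i"
      unfolding Mrow_def by (intro arg_cong[where f=suminf] ext) auto
    finally have split: "Mrow P i = A + T" by simp
    have Afin: "A = (\<Sum>j\<in>{..N}. Mmat P i j)"
      unfolding A_def by (subst suminf_finite[of "{..N}"]) auto
    have "ennreal d * A = (\<Sum>j\<in>{..N}. Mmat P i j * ennreal d)"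
      unfolding Afin by (simp add: sum_distrib_left mult.commute)
    also have "\<dots> \<le> (\<Sum>j\<in>{..N}. Mmat P i j * ennreal (u j))"
      using dle by (intro sum_mono mult_left_mono ennreal_leI) auto
    also have "\<dots> \<le> (\<Sum>j. Mmat P i j * ennreal (u j))"
      by (intro sum_le_suminf) auto
    also have "\<dots> \<le> ennreal U" using ueig[of i] U[of i] by (simp add: ennreal_leI)
    finally have dA: "ennreal d * A \<le> ennreal U" .
    have TN: "T \<le> ennreal (1/2) * Mrow P i" using N[of i] by (simp add: T_def)
    obtain m where m: "Mrow P i = ennreal m" "0 \<le> m" using fin[of i] by (cases "Mrow P i") auto
    have "A \<le> Mrow P i" using split by simp
    then obtain a where a: "A = ennreal a" "0 \<le> a" using m by (cases A) (auto simp: top_unique)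
    have "T \<le> Mrow P i" using split by simp
    then obtain t where t: "T = ennreal t" "0 \<le> t" using m by (cases T) (auto simp: top_unique)
    have mat: "m = a + t" using split m a t by (simp add: ennreal_plus[symmetric] del: ennreal_plus)
    have "ennreal t \<le> ennreal (1/2 * m)"
    proof -
      have "ennreal (1/2 * m) = ennreal (1/2) * ennreal m" using m by (intro ennreal_mult) auto
      then show ?thesis using TN t m by simp
    qed
    then have tm: "t \<le> m / 2" using m by (simp add: ennreal_le_iff)
    have "ennreal (d * a) \<le> ennreal U"
    proof -
      have "ennreal (d * a) = ennreal d * ennreal a" using a dpos by (intro ennreal_mult) auto
      then show ?thesis using dA a by simp
    qed
    then have da: "d * a \<le> U" using U0 by (simp add: ennreal_le_iff)
    have "m \<le> 2 * a" using mat tm by simp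
    then have "m * d \<le> (2 * a) * d" using dpos by (intro mult_right_mono) auto
    then have "m * d \<le> 2 * U" using da by (simp add: algebra_simps)
    then have "m \<le> 2 * U / d" using dpos by (simp add: pos_le_divide_eq)
    then show "Mrow P i \<le> ennreal (2 * U / d)" using m by (simp add: ennreal_leI)
  qed
qed



theorem lemma4:
  fixes P :: "nat \<Rightarrow> (nat \<Rightarrow> nat) pmf"
  assumes finite_offspring: "\<And>i z. z \<in> set_pmf (P i) \<Longrightarrow> finite (supp z)"
    and M1: "in_M1 P"
    and nonlinear: "\<not> (\<forall>i s. (\<forall>j. 0 \<le> s j \<and> s j \<le> 1) \<longrightarrow>
                         ennreal (F1 P i s) = (\<Sum>j. Mmat P i j * ennreal (s j)))"
  shows "\<forall>\<epsilon>>0. \<exists>N. \<forall>n\<ge>N. \<forall>i. \<forall>s. (\<forall>j. 0 < s j \<and> s j \<le> 1) \<longrightarrow>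
           \<bar>Fgen P n i s - 1\<bar> < \<epsilon>"
proof -
  note fo = finite_offspring
  note parts = M1[unfolded in_M1_def]
  have irr: "\<And>i j. \<exists>n. Mpow P n i j > 0" using parts[THEN conjunct1] by blast
  have "\<exists>v u :: nat \<Rightarrow> real.
        (\<forall>j. v j > 0) \<and> (\<forall>i. u i > 0) \<and>
        (\<forall>j. (\<Sum>i. ennreal (v i) * Mmat P i j) = ennreal (v j)) \<and>
        (\<forall>i. (\<Sum>j. Mmat P i j * ennreal (u j)) = ennreal (u i)) \<and>
        (\<Sum>j. ennreal (v j * u j)) = 1 \<and>
        (\<Sum>j. ennreal (v j)) = 1 \<and>
        bdd_above (range u)" using parts[THEN conjunct2, THEN conjunct2, THEN conjunct2, THEN conjunct2, THEN conjunct2, THEN conjunct1] by assumption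
  then obtain v u :: "nat \<Rightarrow> real" where
    vpos: "\<And>j. v j > 0" and upos: "\<And>i. u i > 0"
    and veig: "\<And>j. (\<Sum>i. ennreal (v i) * Mmat P i j) = ennreal (v j)"
    and ueig: "\<And>i. (\<Sum>j. Mmat P i j * ennreal (u j)) = ennreal (u i)"
    and vsum: "(\<Sum>j. ennreal (v j)) = 1"
    and ubdd: "bdd_above (range u)" by blast
  have tail: "\<forall>\<epsilon>::real. \<epsilon> > 0 \<longrightarrow> (\<exists>N0. \<forall>N\<ge>N0. \<forall>i.
         (\<Sum>j. if j > N then Mmat P i j else 0) \<le> ennreal \<epsilon> * Mrow P i)"
    using parts[THEN conjunct2, THEN conjunct2, THEN conjunct2, THEN conjunct2, THEN conjunct2, THEN conjunct2, THEN conjunct1] by assumption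
  have fin: "\<And>i. Mrow P i \<noteq> \<top>" using Mrow_fin[OF vpos veig vsum] by blast
  obtain B where B0: "B > 0" and B: "\<And>i. Mrow P i \<le> ennreal B"
    using Mrow_bound[OF upos ueig ubdd tail fin] by blast
  have ext: "(\<lambda>n. q P n j) \<longlonglongrightarrow> 1" for j
  proof -
    have "(\<lambda>n. q P n j) \<longlonglongrightarrow> qs P j" by (rule q_lim) (rule fo)
    moreover have "qs P j = 1" by (rule extinction[OF _ irr vpos veig vsum nonlinear]) (rule fo)
    ultimately show ?thesis by simp
  qed
  show ?thesis
  proof (intro allI impI)
    fix \<epsilon> :: real assume \<epsilon>: "\<epsilon> > 0"
    define e where "e = \<epsilon> / (2 * B + 1)"
    have e0: "e > 0" using \<epsilon> B0 by (simp add: e_def)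
    have eB: "2 * e * B < \<epsilon>"
    proof -
      have "2 * e * B = \<epsilon> * (2 * B) / (2 * B + 1)" by (simp add: e_def)
      also have "\<dots> < \<epsilon>" using \<epsilon> B0 by (simp add: divide_less_eq)
      finally show ?thesis .
    qed
    obtain N where TN: "\<And>i. (\<Sum>j. if j > N then Mmat P i j else 0) \<le> ennreal e * Mrow P i"
      using tail[rule_format, OF e0] by auto
    have "eventually (\<lambda>n. \<forall>j\<in>{..N}. 1 - q P n j < e) sequentially"
    proof (intro eventually_ball_finite ballI)
      fix j
      have "eventually (\<lambda>n. dist (q P n j) 1 < e) sequentially"
        using ext[of j] e0 by (rule tendstoD)
      then show "eventually (\<lambda>n. 1 - q P n j < e) sequentially"
        by eventually_elim (auto simp: dist_real_def)
    qed auto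
    then obtain n0 where n0: "\<And>n j. n \<ge> n0 \<Longrightarrow> j \<le> N \<Longrightarrow> 1 - q P n j < e"
      unfolding eventually_sequentially by blast
    show "\<exists>N. \<forall>n\<ge>N. \<forall>i. \<forall>s. (\<forall>j. 0 < s j \<and> s j \<le> 1) \<longrightarrow> \<bar>Fgen P n i s - 1\<bar> < \<epsilon>"
    proof (intro exI[of _ "Suc n0"] allI impI)
      fix n i :: nat and s :: "nat \<Rightarrow> real" assume n: "Suc n0 \<le> n" and s: "\<forall>j. 0 < s j \<and> s j \<le> 1"
      obtain m where m: "n = Suc m" "m \<ge> n0" using n by (cases n) auto
      define r where "r j = 1 - q P m j" for j
      have r01: "\<And>j. 0 \<le> r j \<and> r j \<le> 1" using q_bounds by (auto simp: r_def)
      have Hr: "H (\<lambda>j. 1 - r j) = H (q P m)" by (simp add: r_def)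
      have "ennreal (1 - q P n i) = ennreal (1 - measure_pmf.expectation (P i) (H (\<lambda>j. 1 - r j)))"
        unfolding Hr m(1) using q_Suc[of P m i] fo by simp
      also have "\<dots> \<le> MX P i r" by (rule G_le_MX[OF fo r01])
      also have "\<dots> \<le> (\<Sum>j. Mmat P i j * ennreal e + (if j > N then Mmat P i j else 0))"
        unfolding MX_def
      proof (intro suminf_le)
        fix j
        show "Mmat P i j * ennreal (r j) \<le> Mmat P i j * ennreal e + (if j > N then Mmat P i j else 0)"
        proof (cases "j \<le> N")
          case True
          then have "r j \<le> e" using n0[OF m(2) True] by (simp add: r_def)
          then have "Mmat P i j * ennreal (r j) \<le> Mmat P i j * ennreal e"
            by (intro mult_left_mono ennreal_leI) auto
          then show ?thesis using True by simp
        next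
          case False
          have "Mmat P i j * ennreal (r j) \<le> Mmat P i j * 1"
            using r01[of j] by (intro mult_left_mono) (auto simp: ennreal_le_1)
          then show ?thesis using False by (simp add: add_increasing)
        qed
      qed auto
      also have "\<dots> = (\<Sum>j. Mmat P i j * ennreal e) + (\<Sum>j. if j > N then Mmat P i j else 0)"
        by (rule suminf_add[symmetric]) auto
      also have "\<dots> = Mrow P i * ennreal e + (\<Sum>j. if j > N then Mmat P i j else 0)"
        unfolding Mrow_def by (simp add: ennreal_suminf_multc)
      also have "\<dots> \<le> ennreal B * ennreal e + ennreal e * ennreal B"
      proof (rule add_mono)
        show "Mrow P i * ennreal e \<le> ennreal B * ennreal e" by (rule mult_right_mono[OF B]) simp
        have "ennreal e * Mrow P i \<le> ennreal e * ennreal B" by (rule mult_left_mono[OF B]) simp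
        then show "(\<Sum>j. if j > N then Mmat P i j else 0) \<le> ennreal e * ennreal B"
          using TN[of i] by (rule order_trans[rotated])
      qed
      also have "\<dots> = ennreal (2 * e * B)"
        using e0 B0 by (simp add: ennreal_mult[symmetric] ennreal_plus[symmetric] del: ennreal_plus algebra_simps)
      finally have "ennreal (1 - q P n i) \<le> ennreal (2 * e * B)" .
      then have rq: "1 - q P n i \<le> 2 * e * B" using e0 B0 by (simp add: ennreal_le_iff)
      have s': "\<And>j. 0 < s j \<and> s j \<le> 1" using s by blast
      have "q P n i \<le> Fgen P n i s" by (rule Fgen_ge_q[OF s'])
      moreover have "Fgen P n i s \<le> 1" using Fgen_bounds[of s P n i] s' by (auto intro: less_imp_le)
      ultimately show "\<bar>Fgen P n i s - 1\<bar> < \<epsilon>" using rq eB by linarith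
    qed
  qed
qed

end
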